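(* Let $q>9$ be a prime power with $q\equiv 1 \pmod 4$. Every signed graph $G$ with maximum average degree $\mathrm{mad}(G) < 4-\frac{8}{q+3}$ admits a homomorphism to the signed graph $SP_q^+$. That is, $\chi_s(\mathcal{M}_{4-\frac{8}{q+3}}) \le q+1$.
   Context: A signed graph $G=(V,E,s)$ is a finite simple graph $(V,E)$ (no loops, no parallel edges) together with a signature $s:E\to\{-1,+1\}$; edges with sign $+1$ are positive, with sign $-1$ negative. Switching a vertex $v$ reverses the sign of every edge incident to $v$; two signed graphs are switching equivalent if one can be obtained from the other by a sequence of switches. For signed graphs $G$ and $H$, a map $\varphi:V(G)\to V(H)$ is a homomorphism if there is a signed graph $G'$ switching equivalent to $G$ such that for every edge $uv$ of $G'$, $\varphi(u)\varphi(v)$ is an edge of $H$ with the same sign as $uv$ in $G'$. The chromatic number $\chi_s(G)$ is the minimum order of a signed graph $H$ such that $G$ admits a homomorphism to $H$; for a class $\mathcal{C}$ of signed graphs, $\chi_s(\mathcal{C})$ is the maximum of $\chi_s(G)$ over $G\in\mathcal{C}$. The maximum average degree $\mathrm{mad}(G)$ is the maximum of $2|E(H)|/|V(H)|$ over all (nonempty) subgraphs $H$ of the underlying graph; $\mathcal{M}_k$ denotes the class of signed graphs with $\mathrm{mad} < k$. For a prime power $q\equiv 1 \pmod 4$, the signed Paley graph $SP_q$ has vertex set the finite field $\mathbb{F}_q$, and any two distinct vertices $u,v$ are joined by a positive edge if $u-v$ is a square in $\mathbb{F}_q$ and by a negative edge otherwise. For a signed graph $H$, $H^+$ denotes the signed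 graph obtained from $H$ by adding one new vertex joined by a positive edge to every vertex of $H$. Thus $SP_q^+$ is a complete signed graph on $q+1$ vertices. *)

theory Defs
  imports Complex_Main
begin

text \<open>A signed graph is given by a vertex set V, an edge set E of 2-element
subsets of V, and a signature s on edges (True = positive, False = negative).\<close>

definition signed_graph :: "'v set \<Rightarrow> 'v set set \<Rightarrow> ('v set \<Rightarrow> bool) \<Rightarrow> bool" where
  "signed_graph V E s \<longleftrightarrow> finite V \<and> (\<forall>e\<in>E. e \<subseteq> V \<and> card e = 2)"

definition switch :: "'v \<Rightarrow> ('v set \<Rightarrow> bool) \<Rightarrow> ('v set \<Rightarrow> bool)" where
  "switch v s = (\<lambda>e. if v \<in> e then \<not> s e else s e)"

definition switching_equiv :: "'v set \<Rightarrow> ('v set \<Rightarrow> bool) \<Rightarrow> ('v set \<Rightarrow> bool) \<Rightarrow> bool" where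
  "switching_equiv V s s' \<longleftrightarrow> (\<lambda>a b. \<exists>v\<in>V. b = switch v a)\<^sup>*\<^sup>* s s'"

definition signed_hom ::
  "'v set \<Rightarrow> 'v set set \<Rightarrow> ('v set \<Rightarrow> bool) \<Rightarrow>
   'w set \<Rightarrow> 'w set set \<Rightarrow> ('w set \<Rightarrow> bool) \<Rightarrow> ('v \<Rightarrow> 'w) \<Rightarrow> bool" where
  "signed_hom V E s W F t \<phi> \<longleftrightarrow> (\<forall>v\<in>V. \<phi> v \<in> W) \<and>
     (\<exists>s'. switching_equiv V s s' \<and>
        (\<forall>u v. {u, v} \<in> E \<longrightarrow> {\<phi> u, \<phi> v} \<in> F \<and> t {\<phi> u, \<phi> v} = s' {u, v}))"

definition mad :: "'v set \<Rightarrow> 'v set set \<Rightarrow> real" where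
  "mad V E = Max {2 * real (card E') / real (card V') | V' E'.
                    V' \<subseteq> V \<and> V' \<noteq> {} \<and> E' \<subseteq> E \<and> (\<forall>e\<in>E'. e \<subseteq> V')}"

definition SP_V :: "'f::field set" where "SP_V = UNIV"
definition SP_E :: "'f::field set set" where "SP_E = {{u, v} | u v. u \<noteq> v}"
definition SP_sign :: "'f::field set \<Rightarrow> bool" where
  "SP_sign e \<longleftrightarrow> (\<exists>u v. e = {u, v} \<and> u \<noteq> v \<and> (\<exists>c. u - v = c * c))"

text \<open>H^+: add a new vertex (None) joined positively to all vertices of H.\<close>
definition plus_V :: "'a set \<Rightarrow> 'a option set" where
  "plus_V V = insert None (Some ` V)"
definition plus_E :: "'a set \<Rightarrow> 'a set set \<Rightarrow> 'a option set set" where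
  "plus_E V E = (image Some) ` E \<union> {{None, Some v} | v. v \<in> V}"
definition plus_sign :: "('a set \<Rightarrow> bool) \<Rightarrow> 'a option set \<Rightarrow> bool" where
  "plus_sign s e = (if None \<in> e then True else s (Some -` e))"

end

theory Submission
  imports Defs
begin


lemma invol_even:
  assumes "finite B" "\<forall>x\<in>B. f x \<in> B \<and> f (f x) = x \<and> f x \<noteq> x"
  shows "even (card B)"
  using assms
proof (induction "card B" arbitrary: B rule: less_induct)
  case less
  show ?case
  proof (cases "B = {}")
    case True then show ?thesis by simp
  next
    case False
    then obtain x where x: "x \<in> B" by blast
    let ?B = "B - {x, f x}"
    have fx: "f x \<in> B" "f x \<noteq> x" using less.prems x by auto
    have c: "card B = card ?B + 2"
    proof -
      have "{x, f x} \<subseteq> B" using x fx by auto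
      moreover have "card {x, f x} = 2" using fx by auto
      ultimately show ?thesis using less.prems(1)
        by (metis card_Diff_subset card_mono finite_subset le_add_diff_inverse2 add.commute)
    qed
    have "even (card ?B)"
    proof (rule less.hyps)
      show "card ?B < card B" using c by simp
      show "finite ?B" using less.prems by simp
      show "\<forall>y\<in>?B. f y \<in> ?B \<and> f (f y) = y \<and> f y \<noteq> y"
        using less.prems x by (metis Diff_iff insert_iff singletonD)
    qed
    then show ?thesis using c by simp
  qed
qed

lemma invol_parity:
  assumes "finite A" "\<forall>x\<in>A. f x \<in> A \<and> f (f x) = x"
  shows "even (card A - card {x\<in>A. f x = x})" "card {x\<in>A. f x = x} \<le> card A"
proof -
  have "even (card {x\<in>A. f x \<noteq> x})"
    by (rule invol_even[where f=f]) (use assms in auto)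
  moreover have "card A = card {x\<in>A. f x = x} + card {x\<in>A. f x \<noteq> x}"
    using assms(1) by (subst card_Un_disjoint[symmetric]) (auto intro: arg_cong[where f=card])
  ultimately show "even (card A - card {x\<in>A. f x = x})" "card {x\<in>A. f x = x} \<le> card A" by auto
qed

lemma two_ne_zero_field:
  assumes "odd (card (UNIV::'f::{finite,field} set))"
  shows "(1::'f) + 1 \<noteq> 0"
proof
  assume h: "(1::'f) + 1 = 0"
  have "even (card (UNIV::'f set))"
  proof (rule invol_even[where f="\<lambda>x. x + 1"])
    show "\<forall>x::'f\<in>UNIV. x + 1 \<in> UNIV \<and> x + 1 + 1 = x \<and> x + 1 \<noteq> x"
    proof (intro ballI)
      fix x :: 'f
      have h2: "(2::'f) = 0" using h by simp
      have "x + 1 + 1 = x" by (simp add: add.assoc h2)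
      moreover have "x + 1 \<noteq> x" by simp
      ultimately show "x + 1 \<in> UNIV \<and> x + 1 + 1 = x \<and> x + 1 \<noteq> x" by simp
    qed
  qed simp
  then show False using assms by simp
qed

definition sqr :: "'f::field \<Rightarrow> bool" where "sqr a \<longleftrightarrow> (\<exists>c. a = c * c)"

lemma sq_roots:
  fixes c0 :: "'f::field"
  shows "{c. c * c = c0 * c0} = {c0, - c0}"
proof -
  have "c * c = c0 * c0 \<longleftrightarrow> c = c0 \<or> c = - c0" for c
  proof -
    have "c * c - c0 * c0 = (c - c0) * (c + c0)" by (simp add: algebra_simps)
    then show ?thesis by (auto simp: eq_neg_iff_add_eq_0)
  qed
  then show ?thesis by auto
qed

lemma card_squares:
  assumes odd: "odd (card (UNIV::'f::{finite,field} set))"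
  shows "2 * card {a::'f. a \<noteq> 0 \<and> sqr a} = card (UNIV::'f set) - 1"
proof -
  let ?S = "{a::'f. a \<noteq> 0 \<and> sqr a}"
  have two: "(1::'f) + 1 \<noteq> 0" using two_ne_zero_field[OF odd] .
  have U: "UNIV - {0::'f} = (\<Union>s\<in>?S. {c. c * c = s})"
    by (auto simp: sqr_def)
  have c2: "card {c. c * c = s} = 2" if sS: "s \<in> ?S" for s
  proof -
    obtain c0 where s: "s = c0 * c0" using sS by (auto simp: sqr_def)
    have "c0 \<noteq> 0" using sS s by auto
    have "c0 \<noteq> - c0"
    proof
      assume "c0 = - c0"
      then have "(1 + 1) * c0 = 0" by (simp add: distrib_right eq_neg_iff_add_eq_0)
      then show False using two \<open>c0 \<noteq> 0\<close> by simp
    qed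
    then show ?thesis using s sq_roots[of c0] by simp
  qed
  have "card (UNIV - {0::'f}) = (\<Sum>s\<in>?S. card {c. c * c = s})"
    unfolding U by (rule card_UN_disjoint) auto
  also have "\<dots> = (\<Sum>s\<in>?S. 2)" using c2 by (rule sum.cong[OF refl])
  also have "\<dots> = 2 * card ?S" by simp
  finally show ?thesis by (simp add: card_Diff_singleton)
qed

lemma sqr_mult: "sqr a \<Longrightarrow> sqr b \<Longrightarrow> sqr (a * b)"
  unfolding sqr_def by (metis mult.assoc mult.commute)

lemma sqr_minus_one:
  assumes q: "card (UNIV::'f::{finite,field} set) mod 4 = 1"
  shows "sqr (-1::'f)"
proof (rule ccontr)
  assume nm: "\<not> sqr (-1::'f)"
  let ?S = "{a::'f. a \<noteq> 0 \<and> sqr a}"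
  have odd: "odd (card (UNIV::'f set))" using q by presburger
  have two: "(1::'f) + 1 \<noteq> 0" using two_ne_zero_field[OF odd] .
  have cS: "2 * card ?S = card (UNIV::'f set) - 1" by (rule card_squares[OF odd])
  have evS: "even (card ?S)"
  proof -
    have "card (UNIV::'f set) - 1 = 4 * (card (UNIV::'f set) div 4)" using q by presburger
    then show ?thesis using cS by presburger
  qed
  have inv: "\<forall>x\<in>?S. inverse x \<in> ?S \<and> inverse (inverse x) = x"
  proof
    fix x assume x: "x \<in> ?S"
    then obtain c where c: "x = c * c" by (auto simp: sqr_def)
    have "inverse x = inverse c * inverse c" using c by (simp add: inverse_mult_distrib)
    then have "sqr (inverse x)" unfolding sqr_def by blast
    then show "inverse x \<in> ?S \<and> inverse (inverse x) = x" using x by auto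
  qed
  have fix1: "{x\<in>?S. inverse x = x} = {1}"
  proof
    show "{1} \<subseteq> {x\<in>?S. inverse x = x}" by (auto simp: sqr_def intro: exI[of _ 1])
    show "{x\<in>?S. inverse x = x} \<subseteq> {1}"
    proof
      fix x assume x: "x \<in> {x\<in>?S. inverse x = x}"
      then have "x * x = 1" by (metis (mono_tags, lifting) mem_Collect_eq right_inverse)
      then have "x \<in> {1, -1}" using sq_roots[of 1] by auto
      then show "x \<in> {1}" using x nm by auto
    qed
  qed
  have "even (card ?S - card {x\<in>?S. inverse x = x})"
    by (rule invol_parity(1)) (use inv in auto)
  then have "even (card ?S - 1)" using fix1 by simp
  moreover have "card ?S \<ge> 1"
  proof -
    have "1 \<in> ?S" by (auto simp: sqr_def intro: exI[of _ 1])
    then have "card ?S \<noteq> 0" by (metis card_0_eq empty_iff finite)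
    then show ?thesis by linarith
  qed
  ultimately show False using evS by presburger
qed

lemma sqr_inverse: "sqr a \<Longrightarrow> sqr (inverse (a::'f::field))"
  unfolding sqr_def by (metis inverse_mult_distrib)

lemma sqr_nonsq:
  fixes a b :: "'f::field"
  assumes "a \<noteq> 0" "sqr a" "\<not> sqr b" shows "\<not> sqr (a * b)"
proof
  assume "sqr (a * b)"
  then have "sqr (inverse a * (a * b))" using sqr_mult sqr_inverse assms by blast
  then show False using assms by (simp add: mult.assoc[symmetric])
qed

lemma card_nonsquares:
  assumes q: "card (UNIV::'f::{finite,field} set) mod 4 = 1"
  shows "card {a::'f. a \<noteq> 0 \<and> \<not> sqr a} = card {a::'f. a \<noteq> 0 \<and> sqr a}"
proof -
  have odd: "odd (card (UNIV::'f set))" using q by presburger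
  have e: "UNIV - {0::'f} = {a::'f. a \<noteq> 0 \<and> sqr a} \<union> {a::'f. a \<noteq> 0 \<and> \<not> sqr a}" by auto
  have "card (UNIV - {0::'f}) = card {a::'f. a \<noteq> 0 \<and> sqr a} + card {a::'f. a \<noteq> 0 \<and> \<not> sqr a}"
    unfolding e by (rule card_Un_disjoint) auto
  then show ?thesis using card_squares[OF odd] by (simp add: card_Diff_singleton)
qed

lemma nonsq_mult:
  fixes a b :: "'f::{finite,field}"
  assumes q: "card (UNIV::'f set) mod 4 = 1"
    and ab: "a \<noteq> 0" "b \<noteq> 0" "\<not> sqr a" "\<not> sqr b"
  shows "sqr (a * b)"
proof -
  let ?S = "{a::'f. a \<noteq> 0 \<and> sqr a}"
  let ?N = "{a::'f. a \<noteq> 0 \<and> \<not> sqr a}"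
  have sub: "(\<lambda>s. a * s) ` ?S \<subseteq> ?N"
  proof
    fix y assume "y \<in> (\<lambda>s. a * s) ` ?S"
    then obtain s where s: "s \<in> ?S" "y = a * s" by auto
    have "\<not> sqr (s * a)" using sqr_nonsq[of s a] s ab by auto
    then show "y \<in> ?N" using s ab by (auto simp: mult.commute)
  qed
  have inj: "inj_on (\<lambda>s. a * s) ?S" using ab by (auto intro: inj_onI)
  have "card ((\<lambda>s. a * s) ` ?S) = card ?N"
    using card_image[OF inj] card_nonsquares[OF q] by simp
  then have eq: "(\<lambda>s. a * s) ` ?S = ?N" using sub by (intro card_subset_eq) auto
  have "b \<in> ?N" using ab by auto
  then obtain s where s: "s \<in> ?S" "b = a * s" using eq by blast
  then obtain c where c: "s = c * c" by (auto simp: sqr_def)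
  have "a * b = (a * c) * (a * c)" using s c by (simp add: algebra_simps)
  then show ?thesis unfolding sqr_def by blast
qed

definition chi :: "'f::field \<Rightarrow> int" where
  "chi a = (if a = 0 then 0 else if sqr a then 1 else -1)"

lemma chi_mult:
  fixes a b :: "'f::{finite,field}"
  assumes q: "card (UNIV::'f set) mod 4 = 1"
  shows "chi (a * b) = chi a * chi b"
proof (cases "a = 0 \<or> b = 0")
  case True then show ?thesis by (auto simp: chi_def)
next
  case False
  then have ab: "a \<noteq> 0" "b \<noteq> 0" by auto
  show ?thesis
  proof (cases "sqr a"; cases "sqr b")
    assume "sqr a" "sqr b" then show ?thesis using ab sqr_mult by (auto simp: chi_def)
  next
    assume "sqr a" "\<not> sqr b" then show ?thesis using ab sqr_nonsq[of a b] by (auto simp: chi_def)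
  next
    assume "\<not> sqr a" "sqr b" then show ?thesis using ab sqr_nonsq[of b a] by (auto simp: chi_def mult.commute)
  next
    assume "\<not> sqr a" "\<not> sqr b" then show ?thesis using ab nonsq_mult[OF q, of a b] by (auto simp: chi_def)
  qed
qed

lemma chi_sum:
  assumes q: "card (UNIV::'f::{finite,field} set) mod 4 = 1"
  shows "(\<Sum>a::'f\<in>UNIV. chi a) = 0"
proof -
  let ?S = "{a::'f. a \<noteq> 0 \<and> sqr a}"
  let ?N = "{a::'f. a \<noteq> 0 \<and> \<not> sqr a}"
  have U: "(UNIV::'f set) = insert 0 (?S \<union> ?N)" by auto
  have "(\<Sum>a::'f\<in>UNIV. chi a) = (\<Sum>a\<in>insert 0 (?S \<union> ?N). chi a)"
    by (simp only: U[symmetric])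
  also have "\<dots> = chi (0::'f) + (\<Sum>a\<in>?S \<union> ?N. chi a)"
    by (rule sum.insert) auto
  also have "\<dots> = (\<Sum>a\<in>?S. chi a) + (\<Sum>a\<in>?N. chi a)"
    by (subst sum.union_disjoint) (auto simp: chi_def)
  also have "(\<Sum>a\<in>?S. chi a) = (\<Sum>a\<in>?S. 1)" by (rule sum.cong) (auto simp: chi_def)
  also have "(\<Sum>a\<in>?N. chi a) = (\<Sum>a\<in>?N. -1)" by (rule sum.cong) (auto simp: chi_def)
  finally show ?thesis using card_nonsquares[OF q] by simp
qed

lemma chi_sq: "a \<noteq> 0 \<Longrightarrow> chi a * chi a = 1"
  by (auto simp: chi_def)

lemma jacobsthal:
  fixes d :: "'f::{finite,field}"
  assumes q: "card (UNIV::'f set) mod 4 = 1" and d: "d \<noteq> 0"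
  shows "(\<Sum>u\<in>UNIV. chi u * chi (u - d)) = -1"
proof -
  have "(\<Sum>u\<in>UNIV. chi u * chi (u - d)) = (\<Sum>u\<in>UNIV - {0}. chi u * chi (u - d))"
    by (rule sum.mono_neutral_right) (auto simp: chi_def)
  also have "\<dots> = (\<Sum>u\<in>UNIV - {0}. chi (1 - d / u))"
  proof (rule sum.cong[OF refl])
    fix u :: 'f assume "u \<in> UNIV - {0}"
    then have u: "u \<noteq> 0" by simp
    have "u - d = u * (1 - d / u)" using u by (simp add: field_simps)
    then have "chi (u - d) = chi u * chi (1 - d / u)" using chi_mult[OF q] by simp
    then show "chi u * chi (u - d) = chi (1 - d / u)"
      using chi_sq[OF u] by (simp add: mult.assoc[symmetric])
  qed
  also have "\<dots> = (\<Sum>w\<in>UNIV - {1::'f}. chi w)"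
  proof -
    have bij: "bij_betw (\<lambda>u. 1 - d / u) (UNIV - {0}) (UNIV - {1::'f})"
    proof (rule bij_betw_byWitness[where f'="\<lambda>w. d / (1 - w)"])
      show "\<forall>a\<in>UNIV - {0}. d / (1 - (1 - d / a)) = a" using d by auto
      show "\<forall>a\<in>UNIV - {1}. 1 - d / (d / (1 - a)) = a" using d by auto
      show "(\<lambda>u. 1 - d / u) ` (UNIV - {0}) \<subseteq> UNIV - {1}" using d by auto
      show "(\<lambda>w. d / (1 - w)) ` (UNIV - {1}) \<subseteq> UNIV - {0}" using d by auto
    qed
    show ?thesis by (rule sum.reindex_bij_betw[OF bij])
  qed
  also have "\<dots> = (\<Sum>w::'f\<in>UNIV. chi w) - chi (1::'f)"
    by (simp add: sum_diff1)
  also have "\<dots> = -1"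
  proof -
    have "sqr (1::'f)" unfolding sqr_def by (rule exI[of _ 1]) simp
    then show ?thesis using chi_sum[OF q] by (simp add: chi_def)
  qed
  finally show ?thesis .
qed



definition sg :: "'f::field option \<Rightarrow> 'f option \<Rightarrow> bool" where
  "sg x y = plus_sign SP_sign {x, y}"

definition sgi :: "'f::field option \<Rightarrow> 'f option \<Rightarrow> int" where
  "sgi x y = (if sg x y then 1 else -1)"

lemma sg_sym: "sg x y = sg y x"
  by (simp add: sg_def insert_commute)

lemma sg_None1: "sg None y" and sg_None2: "sg x None"
  by (auto simp: sg_def plus_sign_def)

lemma SP_sign_pair:
  fixes a b :: "'f::{finite,field}"
  assumes q: "card (UNIV::'f set) mod 4 = 1" and ab: "a \<noteq> b"
  shows "SP_sign {a, b} = sqr (a - b)"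
proof -
  have m: "sqr (b - a) = sqr (a - b)"
  proof -
    have "b - a = (-1) * (a - b)" by simp
    moreover have "a - b = (-1) * (b - a)" by simp
    ultimately show ?thesis using sqr_mult[OF sqr_minus_one[OF q]] by metis
  qed
  have "SP_sign {a, b} = (sqr (a - b) \<or> sqr (b - a))"
    unfolding SP_sign_def sqr_def using ab by (auto simp: doubleton_eq_iff)
  then show ?thesis using m by simp
qed

lemma sg_Some:
  fixes a b :: "'f::{finite,field}"
  assumes q: "card (UNIV::'f set) mod 4 = 1" and ab: "a \<noteq> b"
  shows "sg (Some a) (Some b) = sqr (a - b)"
proof -
  have "Some -` {Some a, Some b} = {a, b}" by auto
  then show ?thesis using SP_sign_pair[OF q ab] by (simp add: sg_def plus_sign_def)
qed

lemma sgi_Some: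
  fixes a b :: "'f::{finite,field}"
  assumes q: "card (UNIV::'f set) mod 4 = 1" and ab: "a \<noteq> b"
  shows "sgi (Some a) (Some b) = chi (a - b)"
  using sg_Some[OF q ab] ab by (simp add: sgi_def chi_def)

lemma sgi_None1: "sgi None y = 1" and sgi_None2: "sgi x None = 1"
  by (auto simp: sgi_def sg_None1 sg_None2)

lemma sgi_sq: "sgi x y * sgi x y = 1"
  by (simp add: sgi_def)

lemma shift_sum:
  fixes f :: "'f::{finite,field} \<Rightarrow> int"
  shows "(\<Sum>z\<in>UNIV. f (z - a)) = (\<Sum>u\<in>UNIV. f u)"
proof -
  have "bij_betw (\<lambda>z. z - a) UNIV (UNIV::'f set)"
    by (rule bij_betw_byWitness[where f'="\<lambda>u. u + a"]) auto
  then show ?thesis by (rule sum.reindex_bij_betw)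
qed

lemma optA: "UNIV - {None, Some b} = Some ` (UNIV - {b})"
proof (rule set_eqI)
  fix x :: "'a option" show "x \<in> UNIV - {None, Some b} \<longleftrightarrow> x \<in> Some ` (UNIV - {b})"
    by (cases x) auto
qed

lemma optB: "UNIV - {Some a, Some b} = insert None (Some ` (UNIV - {a, b}))"
proof (rule set_eqI)
  fix x :: "'a option" show "x \<in> UNIV - {Some a, Some b} \<longleftrightarrow> x \<in> insert None (Some ` (UNIV - {a, b}))"
    by (cases x) auto
qed

lemma chi_zero: "chi 0 = 0" by (simp add: chi_def)

lemma T_lemma:
  fixes y1 y2 :: "'f::{finite,field} option"
  assumes q: "card (UNIV::'f set) mod 4 = 1" and ne: "y1 \<noteq> y2"
  shows "(\<Sum>x\<in>UNIV - {y1, y2}. sgi x y1 * sgi x y2) = 0"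
proof (cases y1; cases y2)
  assume "y1 = None" "y2 = None" then show ?thesis using ne by simp
next
  fix b assume h: "y1 = None" "y2 = Some b"
  have e: "UNIV - {y1, y2} = Some ` (UNIV - {b})" using h optA by simp
  have "(\<Sum>x\<in>UNIV - {y1, y2}. sgi x y1 * sgi x y2) = (\<Sum>z\<in>UNIV - {b}. sgi (Some z) y1 * sgi (Some z) y2)"
    unfolding e by (subst sum.reindex) (auto simp: inj_on_def)
  also have "\<dots> = (\<Sum>z\<in>UNIV - {b}. chi (z - b))"
    by (rule sum.cong) (auto simp: h sgi_None2 sgi_Some[OF q])
  also have "\<dots> = (\<Sum>z\<in>UNIV. chi (z - b))"
    by (rule sum.mono_neutral_left) (auto simp: chi_zero)
  also have "\<dots> = 0" using shift_sum[of chi b] chi_sum[OF q] by simp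
  finally show ?thesis .
next
  fix a assume h: "y1 = Some a" "y2 = None"
  have e: "UNIV - {y1, y2} = Some ` (UNIV - {a})" using h optA[of a] by (simp add: insert_commute)
  have "(\<Sum>x\<in>UNIV - {y1, y2}. sgi x y1 * sgi x y2) = (\<Sum>z\<in>UNIV - {a}. sgi (Some z) y1 * sgi (Some z) y2)"
    unfolding e by (subst sum.reindex) (auto simp: inj_on_def)
  also have "\<dots> = (\<Sum>z\<in>UNIV - {a}. chi (z - a))"
    by (rule sum.cong) (auto simp: h sgi_None2 sgi_Some[OF q])
  also have "\<dots> = (\<Sum>z\<in>UNIV. chi (z - a))"
    by (rule sum.mono_neutral_left) (auto simp: chi_zero)
  also have "\<dots> = 0" using shift_sum[of chi a] chi_sum[OF q] by simp
  finally show ?thesis .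
next
  fix a b assume h: "y1 = Some a" "y2 = Some b"
  have ab: "a \<noteq> b" using ne h by simp
  have e: "UNIV - {y1, y2} = insert None (Some ` (UNIV - {a, b}))" using h optB by simp
  have "(\<Sum>x\<in>UNIV - {y1, y2}. sgi x y1 * sgi x y2)
       = sgi None y1 * sgi None y2 + (\<Sum>z\<in>UNIV - {a, b}. sgi (Some z) y1 * sgi (Some z) y2)"
    unfolding e by (subst sum.insert) (auto simp: sum.reindex inj_on_def)
  also have "(\<Sum>z\<in>UNIV - {a, b}. sgi (Some z) y1 * sgi (Some z) y2) = (\<Sum>z\<in>UNIV - {a, b}. chi (z - a) * chi (z - b))"
    by (rule sum.cong) (auto simp: h sgi_Some[OF q])
  also have "\<dots> = (\<Sum>z\<in>UNIV. chi (z - a) * chi (z - b))"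
    by (rule sum.mono_neutral_left) (auto simp: chi_zero)
  also have "\<dots> = (\<Sum>z\<in>UNIV. chi (z - a) * chi ((z - a) - (b - a)))" by simp
  also have "\<dots> = (\<Sum>u\<in>UNIV. chi u * chi (u - (b - a)))"
    using shift_sum[of "\<lambda>u. chi u * chi (u - (b - a))" a] by simp
  also have "\<dots> = -1" using jacobsthal[OF q, of "b - a"] ab by simp
  finally show ?thesis by (simp add: sgi_None1)
qed



lemma card_opt_UNIV: "card (UNIV :: 'f::finite option set) = card (UNIV :: 'f set) + 1"
proof -
  have e: "(UNIV :: 'f option set) = insert None (range Some)"
    by (rule set_eqI) (case_tac x, auto)
  have c: "card (range (Some :: 'f \<Rightarrow> _)) = card (UNIV :: 'f set)"
    by (rule card_image) (auto simp: inj_on_def)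
  have "card (insert None (range (Some::'f \<Rightarrow> _))) = Suc (card (range (Some::'f \<Rightarrow> _)))"
    by (rule card_insert_disjoint) auto
  then show ?thesis using c by (simp only: e[symmetric])
qed

lemma card_filter_sum: "finite A \<Longrightarrow> int (card {x\<in>A. P x}) = (\<Sum>x\<in>A. if P x then 1 else 0)"
  by (simp add: sum.If_cases Int_def conj_commute)

definition opt :: "nat \<Rightarrow> nat \<Rightarrow> nat" where
  "opt q k = (if k = 0 then q + 1 else if k = 1 then q else if k = 2 then (q - 1) div 2 else (q - 5) div 4)"

lemma S3_lemma:
  fixes y1 y2 y3 :: "'f::{finite,field} option"
  assumes q: "card (UNIV::'f set) mod 4 = 1" and ne: "y1 \<noteq> y2" "y3 \<noteq> y1" "y3 \<noteq> y2"
  shows "(\<Sum>x\<in>UNIV - {y1, y2, y3}. sgi x y1 * sgi x y2) = - (sgi y3 y1 * sgi y3 y2)"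
proof -
  have e: "UNIV - {y1, y2} = insert y3 (UNIV - {y1, y2, y3})" using ne by auto
  have "0 = (\<Sum>x\<in>UNIV - {y1, y2}. sgi x y1 * sgi x y2)" using T_lemma[OF q ne(1)] by simp
  also have "\<dots> = sgi y3 y1 * sgi y3 y2 + (\<Sum>x\<in>UNIV - {y1, y2, y3}. sgi x y1 * sgi x y2)"
    unfolding e by (rule sum.insert) auto
  finally show ?thesis by simp
qed

definition sgn_of :: "bool \<Rightarrow> int" where "sgn_of b = (if b then 1 else -1)"

lemma ext_count:
  fixes Y :: "'f::{finite,field} option set" and t :: "'f option \<Rightarrow> bool"
  assumes q: "card (UNIV::'f set) mod 4 = 1" and cY: "card Y \<le> 3"
  shows "opt (card (UNIV::'f set)) (card Y) \<le> card {x. x \<notin> Y \<and> (\<exists>\<eta>. \<forall>y\<in>Y. sg x y = (\<eta> = t y))}"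
proof -
  let ?q = "card (UNIV::'f set)"
  let ?G = "{x. x \<notin> Y \<and> (\<exists>\<eta>. \<forall>y\<in>Y. sg x y = (\<eta> = t y))}"
  have cU: "card (UNIV :: 'f option set) = ?q + 1" by (rule card_opt_UNIV)
  have "card Y = 0 \<or> card Y = 1 \<or> card Y = 2 \<or> card Y = 3" using cY by linarith
  moreover
  { assume c: "card Y = 0"
    then have "Y = {}" by (simp add: card_eq_0_iff)
    then have "?G = UNIV" by auto
    then have ?thesis using c cU by (simp add: opt_def) }
  moreover
  { assume c: "card Y = 1"
    then obtain y where Y: "Y = {y}" by (auto simp: card_1_singleton_iff)
    have "?G = UNIV - {y}"
    proof (rule set_eqI)
      fix x show "x \<in> ?G \<longleftrightarrow> x \<in> UNIV - {y}"
        using Y by (auto intro: exI[of _ "sg x y = t y"])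
    qed
    then have "card ?G = ?q" using cU by (simp add: card_Diff_singleton)
    then have ?thesis using c by (simp add: opt_def) }
  moreover
  { assume c: "card Y = 2"
    then obtain y1 y2 where Y: "Y = {y1, y2}" and ne: "y1 \<noteq> y2" by (auto simp: card_2_iff)
    let ?P = "\<lambda>x. (sg x y1 = t y1) = (sg x y2 = t y2)"
    let ?A = "UNIV - {y1, y2}"
    have G: "?G = {x\<in>?A. ?P x}"
    proof (rule set_eqI)
      fix x show "x \<in> ?G \<longleftrightarrow> x \<in> {x\<in>?A. ?P x}"
        using Y by (auto intro: exI[of _ "sg x y1 = t y1"])
    qed
    have cA: "card ?A = ?q - 1" using cU ne by (simp add: card_Diff_subset)
    have pt: "2 * (if ?P x then 1 else 0) = 1 + sgn_of (t y1) * sgn_of (t y2) * (sgi x y1 * sgi x y2)" for x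
      by (cases "sg x y1"; cases "sg x y2"; cases "t y1"; cases "t y2") (simp_all add: sgi_def sgn_of_def)
    have "int (card ?G) = (\<Sum>x\<in>?A. if ?P x then 1 else 0)"
      unfolding G by (rule card_filter_sum) simp
    then have "2 * int (card ?G) = (\<Sum>x\<in>?A. 2 * (if ?P x then 1 else 0))"
      by (simp only: sum_distrib_left)
    also have "\<dots> = (\<Sum>x\<in>?A. 1 + sgn_of (t y1) * sgn_of (t y2) * (sgi x y1 * sgi x y2))"
      using pt by simp
    also have "\<dots> = int (card ?A) + sgn_of (t y1) * sgn_of (t y2) * (\<Sum>x\<in>?A. sgi x y1 * sgi x y2)"
      by (simp add: sum.distrib sum_distrib_left)
    also have "\<dots> = int (card ?A)" using T_lemma[OF q ne] by simp
    finally have "2 * card ?G = ?q - 1" using cA by linarith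
    then have ?thesis using c by (simp add: opt_def) }
  moreover
  { assume c: "card Y = 3"
    then obtain y1 y2 y3 where Y: "Y = {y1, y2, y3}" and ne: "y1 \<noteq> y2" "y2 \<noteq> y3" "y1 \<noteq> y3"
      by (auto simp: card_3_iff)
    let ?P = "\<lambda>x. (sg x y1 = t y1) = (sg x y2 = t y2) \<and> (sg x y1 = t y1) = (sg x y3 = t y3)"
    let ?A = "UNIV - {y1, y2, y3}"
    have G: "?G = {x\<in>?A. ?P x}"
    proof (rule set_eqI)
      fix x show "x \<in> ?G \<longleftrightarrow> x \<in> {x\<in>?A. ?P x}"
        using Y by (auto intro: exI[of _ "sg x y1 = t y1"])
    qed
    have cA: "card ?A = ?q - 2" using cU ne c Y by (simp add: card_Diff_subset)
    let ?e1 = "sgn_of (t y1)" let ?e2 = "sgn_of (t y2)" let ?e3 = "sgn_of (t y3)"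
    have pt: "4 * (if ?P x then 1 else 0) = 1 + ?e1 * ?e2 * (sgi x y1 * sgi x y2)
       + ?e1 * ?e3 * (sgi x y1 * sgi x y3) + ?e2 * ?e3 * (sgi x y2 * sgi x y3)" for x
      by (cases "sg x y1"; cases "sg x y2"; cases "sg x y3"; cases "t y1"; cases "t y2"; cases "t y3")
         (simp_all add: sgi_def sgn_of_def)
    have A2: "?A = UNIV - {y1, y3, y2}" "?A = UNIV - {y2, y3, y1}" by auto
    have s12: "(\<Sum>x\<in>?A. sgi x y1 * sgi x y2) = - (sgi y3 y1 * sgi y3 y2)"
      by (rule S3_lemma[OF q]) (use ne in auto)
    have s13: "(\<Sum>x\<in>?A. sgi x y1 * sgi x y3) = - (sgi y2 y1 * sgi y2 y3)"
      unfolding A2(1) by (rule S3_lemma[OF q]) (use ne in auto)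
    have s23: "(\<Sum>x\<in>?A. sgi x y2 * sgi x y3) = - (sgi y1 y2 * sgi y1 y3)"
      unfolding A2(2) by (rule S3_lemma[OF q]) (use ne in auto)
    have b: "- 1 \<le> e * (- (sgi a b * sgi a c))" if "e = 1 \<or> e = -1" for e :: int and a b c :: "'f option"
      using that by (auto simp: sgi_def)
    have e: "sgn_of b = 1 \<or> sgn_of b = -1" for b by (simp add: sgn_of_def)
    have "int (card ?G) = (\<Sum>x\<in>?A. if ?P x then 1 else 0)"
      unfolding G by (rule card_filter_sum) simp
    then have "4 * int (card ?G) = (\<Sum>x\<in>?A. 4 * (if ?P x then 1 else 0))"
      by (simp only: sum_distrib_left)
    also have "\<dots> = (\<Sum>x\<in>?A. 1 + ?e1 * ?e2 * (sgi x y1 * sgi x y2)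
       + ?e1 * ?e3 * (sgi x y1 * sgi x y3) + ?e2 * ?e3 * (sgi x y2 * sgi x y3))"
      using pt by simp
    also have "\<dots> = int (card ?A) + ?e1 * ?e2 * (\<Sum>x\<in>?A. sgi x y1 * sgi x y2)
       + ?e1 * ?e3 * (\<Sum>x\<in>?A. sgi x y1 * sgi x y3) + ?e2 * ?e3 * (\<Sum>x\<in>?A. sgi x y2 * sgi x y3)"
      by (simp add: sum.distrib sum_distrib_left)
    finally have eq4: "4 * int (card ?G) = int (card ?A) + ?e1 * ?e2 * (- (sgi y3 y1 * sgi y3 y2))
       + ?e1 * ?e3 * (- (sgi y2 y1 * sgi y2 y3)) + ?e2 * ?e3 * (- (sgi y1 y2 * sgi y1 y3))"
      using s12 s13 s23 by simp
    have "-1 \<le> ?e1 * ?e2 * (- (sgi y3 y1 * sgi y3 y2))"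
      by (rule b) (use e in \<open>auto simp: sgn_of_def\<close>)
    moreover have "-1 \<le> ?e1 * ?e3 * (- (sgi y2 y1 * sgi y2 y3))"
      by (rule b) (use e in \<open>auto simp: sgn_of_def\<close>)
    moreover have "-1 \<le> ?e2 * ?e3 * (- (sgi y1 y2 * sgi y1 y3))"
      by (rule b) (use e in \<open>auto simp: sgn_of_def\<close>)
    ultimately have "4 * int (card ?G) \<ge> int (card ?A) - 3" using eq4 by linarith
    then have "4 * card ?G + 5 \<ge> ?q" using cA cU by linarith
    then have ?thesis using c by (simp add: opt_def) }
  ultimately show ?thesis by blast
qed



definition nb :: "'v set set \<Rightarrow> 'v set \<Rightarrow> 'v \<Rightarrow> 'v set" where
  "nb E H v = {u\<in>H. {u, v} \<in> E}"

definition deg :: "'v set set \<Rightarrow> 'v set \<Rightarrow> 'v \<Rightarrow> nat" where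
  "deg E H v = card (nb E H v)"

definition load :: "'v set \<Rightarrow> 'v set set \<Rightarrow> 'v set \<Rightarrow> 'v \<Rightarrow> nat" where
  "load V E H v = (\<Sum>w\<in>{w\<in>V - H. {w, v} \<in> E}. deg E H w - 1)"

lemma handshake:
  assumes edges: "\<forall>e\<in>E. card e = 2" and finH: "finite H"
  shows "(\<Sum>v\<in>H. deg E H v) \<le> 2 * card {e\<in>E. e \<subseteq> H}"
proof -
  let ?P = "Sigma H (\<lambda>v. nb E H v)"
  let ?F = "\<lambda>e. {p\<in>H \<times> H. {fst p, snd p} = e}"
  have finN: "\<forall>v\<in>H. finite (nb E H v)" using finH by (simp add: nb_def)
  have "(\<Sum>v\<in>H. deg E H v) = card ?P"
    unfolding deg_def by (rule card_SigmaI[symmetric]) (use finH finN in auto)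
  also have "\<dots> \<le> card (\<Union>e\<in>{e\<in>E. e \<subseteq> H}. ?F e)"
  proof (rule card_mono)
    show "finite (\<Union>e\<in>{e\<in>E. e \<subseteq> H}. ?F e)"
      by (rule finite_subset[of _ "H \<times> H"]) (use finH in auto)
    show "?P \<subseteq> (\<Union>e\<in>{e\<in>E. e \<subseteq> H}. ?F e)"
    proof
      fix p assume "p \<in> ?P"
      then obtain v u where p: "p = (v, u)" "v \<in> H" "u \<in> H" "{u, v} \<in> E" by (auto simp: nb_def)
      have c: "{v, u} = {u, v}" by (rule insert_commute)
      have "{u, v} \<in> {e\<in>E. e \<subseteq> H}" using p by auto
      moreover have "p \<in> ?F {u, v}" using p(1,2,3) c by simp
      ultimately show "p \<in> (\<Union>e\<in>{e\<in>E. e \<subseteq> H}. ?F e)" by (rule UN_I)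
    qed
  qed
  also have "\<dots> \<le> (\<Sum>e\<in>{e\<in>E. e \<subseteq> H}. card (?F e))" by (rule card_UN_le) (rule finite_subset[of _ "Pow H"], use finH in auto)
  also have "\<dots> \<le> (\<Sum>e\<in>{e\<in>E. e \<subseteq> H}. 2)"
  proof (rule sum_mono)
    fix e assume "e \<in> {e\<in>E. e \<subseteq> H}"
    then have "card e = 2" using edges by auto
    then obtain a b where e: "e = {a, b}" by (auto simp: card_2_iff)
    have "?F e \<subseteq> {(a, b), (b, a)}" using e by (auto simp: doubleton_eq_iff)
    then have "card (?F e) \<le> card {(a, b), (b, a)}" by (rule card_mono[rotated]) simp
    also have "\<dots> \<le> 2" by (cases "a = b") auto
    finally show "card (?F e) \<le> 2" .
  qed
  also have "\<dots> = 2 * card {e\<in>E. e \<subseteq> H}" by simp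
  finally show ?thesis .
qed

lemma edges_lower:
  assumes finV: "finite V" and edges: "\<forall>e\<in>E. e \<subseteq> V" and H: "H \<subseteq> V" and W: "W \<subseteq> V - H"
  shows "card {e\<in>E. e \<subseteq> H} + (\<Sum>w\<in>W. deg E H w) \<le> card {e\<in>E. e \<subseteq> H \<union> W}"
proof -
  have finE: "finite E" by (rule finite_subset[of _ "Pow V"]) (use edges finV in auto)
  have finH: "finite H" using H(1) finV by (rule finite_subset)
  have finW: "finite W" using W finV by (meson Diff_subset finite_subset)
  let ?A = "{e\<in>E. e \<subseteq> H}"
  let ?B = "\<Union>w\<in>W. (\<lambda>h. {h, w}) ` nb E H w"
  have cB: "card ?B = (\<Sum>w\<in>W. deg E H w)"
  proof -
    have "card ?B = (\<Sum>w\<in>W. card ((\<lambda>h. {h, w}) ` nb E H w))"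
    proof (rule card_UN_disjoint)
      show "finite W" by (rule finW)
      show "\<forall>i\<in>W. finite ((\<lambda>h. {h, i}) ` nb E H i)" using finH by (simp add: nb_def)
      show "\<forall>i\<in>W. \<forall>j\<in>W. i \<noteq> j \<longrightarrow> (\<lambda>h. {h, i}) ` nb E H i \<inter> (\<lambda>h. {h, j}) ` nb E H j = {}"
      proof (intro ballI impI)
        fix i j assume ij: "i \<in> W" "j \<in> W" "i \<noteq> j"
        show "(\<lambda>h. {h, i}) ` nb E H i \<inter> (\<lambda>h. {h, j}) ` nb E H j = {}"
        proof (rule ccontr)
          assume "\<not> ?thesis"
          then obtain h h' where hh: "h \<in> H" "h' \<in> H" "{h, i} = {h', j}" by (auto simp: nb_def)
          have "i \<notin> H" "j \<notin> H" using ij W by auto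
          then show False using hh ij(3) by (metis doubleton_eq_iff)
        qed
      qed
    qed
    also have "\<dots> = (\<Sum>w\<in>W. deg E H w)"
    proof (rule sum.cong[OF refl])
      fix w assume "w \<in> W"
      then have "w \<notin> H" using W by auto
      then have "inj_on (\<lambda>h. {h, w}) (nb E H w)"
        unfolding inj_on_def nb_def by (metis (no_types, lifting) doubleton_eq_iff mem_Collect_eq)
      then show "card ((\<lambda>h. {h, w}) ` nb E H w) = deg E H w" by (simp add: card_image deg_def)
    qed
    finally show ?thesis .
  qed
  have disj: "?A \<inter> ?B = {}" using W by (auto simp: nb_def)
  have sub: "?A \<union> ?B \<subseteq> {e\<in>E. e \<subseteq> H \<union> W}" by (auto simp: nb_def)
  have "card ?A + card ?B = card (?A \<union> ?B)"
    by (rule card_Un_disjoint[symmetric]) (use finE finH finW disj in \<open>auto simp: nb_def\<close>)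
  also have "\<dots> \<le> card {e\<in>E. e \<subseteq> H \<union> W}" by (rule card_mono[OF _ sub]) (use finE in simp)
  finally show ?thesis using cB by simp
qed


lemma opt_arith:
  fixes q :: nat
  assumes q: "q mod 4 = 1" "q \<ge> 5"
  shows "2 * ((q - 1) div 2) = q - 1" "4 * ((q - 5) div 4) = q - 5"
  using q by presburger+

lemma peel:
  fixes V :: "'v set" and E :: "'v set set" and q :: nat
  assumes finV: "finite V" and edges: "\<forall>e\<in>E. e \<subseteq> V \<and> card e = 2"
    and dens: "\<forall>S. S \<subseteq> V \<longrightarrow> S \<noteq> {} \<longrightarrow> (q + 3) * card {e\<in>E. e \<subseteq> S} < 2 * (q + 1) * card S"
    and q: "q mod 4 = 1" "q \<ge> 5"
    and H: "H \<subseteq> V" "H \<noteq> {}" and inv: "\<forall>w\<in>V - H. deg E H w \<le> 3"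
  shows "\<exists>v\<in>H. deg E H v \<le> 3 \<and> load V E H v < opt q (deg E H v)"
proof (rule ccontr)
  assume "\<not> ?thesis"
  then have stuck: "\<forall>v\<in>H. deg E H v \<le> 3 \<longrightarrow> opt q (deg E H v) \<le> load V E H v" by auto
  define N :: int where "N = int q + 1"
  define M :: int where "M = int q + 3"
  define W where "W = {w\<in>V - H. deg E H w \<ge> 2}"
  define f :: "'v \<Rightarrow> int" where
    "f w = (if deg E H w = 2 then 12 else if deg E H w = 3 then 2 * N + 12 else 0)" for w
  have finH: "finite H" using H(1) finV by (rule finite_subset)
  have finW: "finite W" using finV by (simp add: W_def)
  have finVH: "finite (V - H)" using finV by simp
  have N6: "N \<ge> 6" using q by (simp add: N_def)
  have oa: "2 * ((q - 1) div 2) = q - 1" "4 * ((q - 5) div 4) = q - 5" using opt_arith[OF q] by auto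
  have degnb: "card {v\<in>H. {w, v} \<in> E} = deg E H w" for w
  proof -
    have "{v\<in>H. {w, v} \<in> E} = nb E H w" by (auto simp: nb_def insert_commute)
    then show ?thesis by (simp add: deg_def)
  qed
  have st1: "12 * N - 3 * M * int (deg E H v) \<le> (\<Sum>w\<in>V - H. if {w, v} \<in> E then f w else 0)"
    if v: "v \<in> H" for v
  proof -
    let ?D = "{w\<in>V - H. {w, v} \<in> E}"
    have e1: "(\<Sum>w\<in>V - H. if {w, v} \<in> E then f w else 0) = (\<Sum>w\<in>?D. f w)"
      by (rule sum.inter_filter[symmetric]) (rule finVH)
    have e2: "12 * int (load V E H v) = (\<Sum>w\<in>?D. 12 * int (deg E H w - 1))"
      by (simp add: load_def sum_distrib_left)
    have e3: "(\<Sum>w\<in>?D. 12 * int (deg E H w - 1)) \<le> (\<Sum>w\<in>?D. f w)"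
    proof (rule sum_mono)
      fix w assume w: "w \<in> ?D"
      have "v \<in> nb E H w" using w v by (auto simp: nb_def insert_commute)
      moreover have "finite (nb E H w)" using finH by (simp add: nb_def)
      ultimately have "deg E H w \<ge> 1" unfolding deg_def by (metis card_0_eq empty_iff less_one not_le)
      moreover have "deg E H w \<le> 3" using inv w by auto
      ultimately have "deg E H w = 1 \<or> deg E H w = 2 \<or> deg E H w = 3" by linarith
      then show "12 * int (deg E H w - 1) \<le> f w" using N6 by (auto simp: f_def)
    qed
    have ld: "12 * int (load V E H v) \<le> (\<Sum>w\<in>V - H. if {w, v} \<in> E then f w else 0)"
      using e1 e2 e3 by linarith
    show ?thesis
    proof (cases "deg E H v \<le> 3")
      case False
      then have d4: "4 \<le> int (deg E H v)" by linarith
      have "M * 4 \<le> M * int (deg E H v)" by (rule mult_left_mono[OF d4]) (simp add: M_def)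
      moreover have "3 * M * int (deg E H v) = 3 * (M * int (deg E H v))" by simp
      moreover have "N \<le> M" by (simp add: N_def M_def)
      ultimately have "12 * N - 3 * M * int (deg E H v) \<le> 0" by linarith
      then show ?thesis using ld by linarith
    next
      case True
      have o: "opt q (deg E H v) \<le> load V E H v" using stuck v True by auto
      have "deg E H v = 0 \<or> deg E H v = 1 \<or> deg E H v = 2 \<or> deg E H v = 3" using True by linarith
      moreover have "int (2 * ((q - 1) div 2)) = int q - 1" "int (4 * ((q - 5) div 4)) = int q - 5"
        using oa q by simp_all
      then have k: "2 * int ((q - 1) div 2) = int q - 1" "4 * int ((q - 5) div 4) = int q - 5"
        by simp_all
      ultimately have "12 * N - 3 * M * int (deg E H v) \<le> 12 * int (opt q (deg E H v))"
      proof (elim disjE)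
        assume "deg E H v = 0" then show ?thesis by (simp add: N_def M_def opt_def)
      next
        assume "deg E H v = 1" then show ?thesis using q by (simp add: N_def M_def opt_def)
      next
        assume "deg E H v = 2" then show ?thesis using k by (simp add: N_def M_def opt_def)
      next
        assume "deg E H v = 3" then show ?thesis using k by (simp add: N_def M_def opt_def)
      qed
      then show ?thesis using o ld by linarith
    qed
  qed
  have sumH: "(\<Sum>v\<in>H. 12 * N - 3 * M * int (deg E H v))
      \<le> (\<Sum>v\<in>H. \<Sum>w\<in>V - H. if {w, v} \<in> E then f w else 0)"
    by (rule sum_mono) (use st1 in auto)
  also have "\<dots> = (\<Sum>w\<in>V - H. \<Sum>v\<in>H. if {w, v} \<in> E then f w else 0)" by (rule sum.swap)
  also have "\<dots> = (\<Sum>w\<in>V - H. f w * int (deg E H w))"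
  proof (rule sum.cong[OF refl])
    fix w assume "w \<in> V - H"
    have "(\<Sum>v\<in>H. if {w, v} \<in> E then f w else 0) = (\<Sum>v\<in>{v\<in>H. {w, v} \<in> E}. f w)"
      by (rule sum.inter_filter[symmetric]) (rule finH)
    also have "\<dots> = f w * int (deg E H w)" using degnb[of w] by simp
    finally show "(\<Sum>v\<in>H. if {w, v} \<in> E then f w else 0) = f w * int (deg E H w)" .
  qed
  also have "\<dots> = (\<Sum>w\<in>W. 6 * M * int (deg E H w) - 12 * N)"
  proof (rule sum.mono_neutral_cong_right)
    show "finite (V - H)" by (rule finVH)
    show "W \<subseteq> V - H" by (auto simp: W_def)
    show "\<forall>w\<in>V - H - W. f w * int (deg E H w) = 0" by (auto simp: W_def f_def)
    show "\<And>w. w \<in> W \<Longrightarrow> f w * int (deg E H w) = 6 * M * int (deg E H w) - 12 * N"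
    proof -
      fix w assume w: "w \<in> W"
      then have "deg E H w \<ge> 2" "deg E H w \<le> 3" using inv by (auto simp: W_def)
      then have "deg E H w = 2 \<or> deg E H w = 3" by linarith
      then show "f w * int (deg E H w) = 6 * M * int (deg E H w) - 12 * N"
        by (auto simp: f_def M_def N_def algebra_simps)
    qed
  qed
  finally have main: "(\<Sum>v\<in>H. 12 * N - 3 * M * int (deg E H v)) \<le> (\<Sum>w\<in>W. 6 * M * int (deg E H w) - 12 * N)" .
  define h where "h = int (card H)"
  define wc where "wc = int (card W)"
  define sdH where "sdH = int (\<Sum>v\<in>H. deg E H v)"
  define sdW where "sdW = int (\<Sum>w\<in>W. deg E H w)"
  define eH where "eH = int (card {e\<in>E. e \<subseteq> H})"
  define eS where "eS = int (card {e\<in>E. e \<subseteq> H \<union> W})"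
  have l1: "(\<Sum>v\<in>H. 12 * N - 3 * M * int (deg E H v)) = 12 * (N * h) - 3 * (M * sdH)"
  proof -
    have "(\<Sum>v\<in>H. 12 * N - 3 * M * int (deg E H v)) = (\<Sum>v\<in>H. 12 * N) - (\<Sum>v\<in>H. 3 * M * int (deg E H v))"
      by (rule sum_subtractf)
    also have "(\<Sum>v\<in>H. 12 * N) = 12 * (N * h)" by (simp add: h_def)
    also have "(\<Sum>v\<in>H. 3 * M * int (deg E H v)) = 3 * M * (\<Sum>v\<in>H. int (deg E H v))"
      by (rule sum_distrib_left[symmetric])
    also have "(\<Sum>v\<in>H. int (deg E H v)) = sdH" by (simp add: sdH_def)
    finally show ?thesis by simp
  qed
  have l2: "(\<Sum>w\<in>W. 6 * M * int (deg E H w) - 12 * N) = 6 * (M * sdW) - 12 * (N * wc)"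
  proof -
    have "(\<Sum>w\<in>W. 6 * M * int (deg E H w) - 12 * N) = (\<Sum>w\<in>W. 6 * M * int (deg E H w)) - (\<Sum>w\<in>W. 12 * N)"
      by (rule sum_subtractf)
    also have "(\<Sum>w\<in>W. 12 * N) = 12 * (N * wc)" by (simp add: wc_def)
    also have "(\<Sum>w\<in>W. 6 * M * int (deg E H w)) = 6 * M * (\<Sum>w\<in>W. int (deg E H w))"
      by (rule sum_distrib_left[symmetric])
    also have "(\<Sum>w\<in>W. int (deg E H w)) = sdW" by (simp add: sdW_def)
    finally show ?thesis by simp
  qed
  have i4: "12 * (N * h) - 3 * (M * sdH) \<le> 6 * (M * sdW) - 12 * (N * wc)"
    using main l1 l2 by simp
  have i3: "sdH \<le> 2 * eH"
  proof -
    have "sum (deg E H) H \<le> 2 * card {e\<in>E. e \<subseteq> H}" using handshake[of E H] edges finH by auto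
    then show ?thesis unfolding sdH_def eH_def by linarith
  qed
  have i2: "eH + sdW \<le> eS"
  proof -
    have "W \<subseteq> V - H" by (auto simp: W_def)
    then have "card {e\<in>E. e \<subseteq> H} + (\<Sum>w\<in>W. deg E H w) \<le> card {e\<in>E. e \<subseteq> H \<union> W}"
      using edges_lower[OF finV _ H(1), of E W] edges by auto
    then show ?thesis unfolding eH_def sdW_def eS_def by linarith
  qed
  have HW: "H \<inter> W = {}" by (auto simp: W_def)
  have cS: "card (H \<union> W) = card H + card W" by (rule card_Un_disjoint) (use finH finW HW in auto)
  have "H \<union> W \<subseteq> V" using H by (auto simp: W_def)
  then have "(q + 3) * card {e\<in>E. e \<subseteq> H \<union> W} < 2 * (q + 1) * card (H \<union> W)"
    using dens H(2) by auto
  then have "(q + 3) * card {e\<in>E. e \<subseteq> H \<union> W} < 2 * (q + 1) * (card H + card W)"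
    by (simp only: cS)
  then have "int ((q + 3) * card {e\<in>E. e \<subseteq> H \<union> W}) < int (2 * (q + 1) * (card H + card W))"
    by (simp only: of_nat_less_iff)
  then have "(int q + 3) * eS < 2 * (int q + 1) * (h + wc)"
    unfolding eS_def h_def wc_def by (simp only: of_nat_mult of_nat_add of_nat_numeral of_nat_1)
  then have i1: "M * eS < 2 * (N * h) + 2 * (N * wc)"
    unfolding M_def N_def by (simp add: algebra_simps)
  have M0: "M > 0" by (simp add: M_def)
  have j2: "M * eH + M * sdW \<le> M * eS"
    using mult_left_mono[OF i2, of M] M0 by (simp add: algebra_simps)
  have j3: "M * sdH \<le> 2 * (M * eH)"
    using mult_left_mono[OF i3, of M] M0 by (simp add: algebra_simps)
  show False using i1 i4 j2 j3 by linarith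
qed



definition valid :: "'v set set \<Rightarrow> ('v set \<Rightarrow> bool) \<Rightarrow> 'v set \<Rightarrow> ('v \<Rightarrow> 'f::field option) \<Rightarrow> ('v \<Rightarrow> bool) \<Rightarrow> bool" where
  "valid E s H c \<beta> \<longleftrightarrow> (\<forall>u\<in>H. \<forall>v\<in>H. {u, v} \<in> E \<longrightarrow> c u \<noteq> c v \<and> sg (c u) (c v) = (s {u, v} = (\<beta> u = \<beta> v)))"

definition cfree :: "'v set \<Rightarrow> 'v set set \<Rightarrow> ('v set \<Rightarrow> bool) \<Rightarrow> 'v set \<Rightarrow> ('v \<Rightarrow> 'f::field option) \<Rightarrow> ('v \<Rightarrow> bool) \<Rightarrow> bool" where
  "cfree V E s H c \<beta> \<longleftrightarrow> (\<forall>w\<in>V - H. \<forall>a\<in>H. \<forall>b\<in>H. {w, a} \<in> E \<longrightarrow> {w, b} \<in> E \<longrightarrow> c a = c b \<longrightarrow>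
      (s {w, a} = \<beta> a) = (s {w, b} = \<beta> b))"

lemma opt_anti:
  assumes "k \<le> l" "l \<le> 3" "q \<ge> 5"
  shows "opt q l \<le> opt q k"
proof -
  have "(q - 5) div 4 \<le> (q - 1) div 2" by (rule order_trans[of _ "(q - 1) div 4"]) (auto intro: div_le_mono div_le_mono2)
  moreover have "(q - 1) div 2 \<le> q" by simp
  ultimately show ?thesis using assms unfolding opt_def by auto
qed

lemma no_loop: "\<forall>e\<in>E. card e = 2 \<Longrightarrow> {v, v} \<notin> E"
  by auto

lemma extend_step:
  fixes V :: "'v set" and E :: "'v set set" and s :: "'v set \<Rightarrow> bool"
    and c :: "'v \<Rightarrow> 'f::{finite,field} option" and \<beta> :: "'v \<Rightarrow> bool"
  assumes q: "card (UNIV::'f set) mod 4 = 1" "card (UNIV::'f set) \<ge> 5"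
    and finV: "finite V" and edges: "\<forall>e\<in>E. e \<subseteq> V \<and> card e = 2"
    and vH: "v \<in> H" "H \<subseteq> V" and dv: "deg E H v \<le> 3"
    and lv: "load V E H v < opt (card (UNIV::'f set)) (deg E H v)"
    and val: "valid E s (H - {v}) c \<beta>" and cf: "cfree V E s (H - {v}) c \<beta>"
  shows "\<exists>(c'::'v \<Rightarrow> 'f option) \<beta>'. valid E s H c' \<beta>' \<and> cfree V E s H c' \<beta>'"
proof -
  let ?q = "card (UNIV::'f set)"
  have finH: "finite H" using vH finV by (meson finite_subset)
  define A where "A = nb E H v"
  have nl: "\<And>x. {x, x} \<notin> E" using edges by auto
  have A_sub: "A \<subseteq> H - {v}" using nl by (auto simp: A_def nb_def)
  have finA: "finite A" using finH A_sub by (meson finite_Diff finite_subset)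
  define Y where "Y = c ` A"
  have cY: "card Y \<le> deg E H v" unfolding Y_def deg_def A_def by (rule card_image_le) (use finA in \<open>simp add: A_def\<close>)
  define t where "t y = (let a = (SOME a. a \<in> A \<and> c a = y) in (s {v, a} = \<beta> a))" for y
  have ht: "t (c a) = (s {v, a} = \<beta> a)" if a: "a \<in> A" for a
  proof -
    define a' where "a' = (SOME a'. a' \<in> A \<and> c a' = c a)"
    have a': "a' \<in> A \<and> c a' = c a" unfolding a'_def by (rule someI[of _ a]) (use a in simp)
    have "v \<in> V - (H - {v})" using vH by auto
    moreover have "a \<in> H - {v}" "a' \<in> H - {v}" using a a' A_sub by auto
    moreover have "{v, a} \<in> E" "{v, a'} \<in> E" using a a' by (auto simp: A_def nb_def insert_commute)
    ultimately have "(s {v, a} = \<beta> a) = (s {v, a'} = \<beta> a')"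
      using cf a' unfolding cfree_def by blast
    then show ?thesis unfolding t_def a'_def[symmetric] Let_def by simp
  qed
  define D where "D = {w\<in>V - H. {w, v} \<in> E}"
  define F where "F = (\<Union>w\<in>D. c ` (nb E H w - {v}))"
  have cF: "card F \<le> load V E H v"
  proof -
    have finD: "finite D" using finV by (simp add: D_def)
    have "card F \<le> (\<Sum>w\<in>D. card (c ` (nb E H w - {v})))" unfolding F_def by (rule card_UN_le[OF finD])
    also have "\<dots> \<le> (\<Sum>w\<in>D. deg E H w - 1)"
    proof (rule sum_mono)
      fix w assume w: "w \<in> D"
      have fin: "finite (nb E H w)" using finH by (simp add: nb_def)
      have "v \<in> nb E H w" using w vH by (auto simp: D_def nb_def insert_commute)
      then have "card (nb E H w - {v}) = deg E H w - 1" using fin by (simp add: deg_def card_Diff_singleton)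
      moreover have "card (c ` (nb E H w - {v})) \<le> card (nb E H w - {v})" by (rule card_image_le) (use fin in simp)
      ultimately show "card (c ` (nb E H w - {v})) \<le> deg E H w - 1" by simp
    qed
    also have "\<dots> = load V E H v" by (simp add: load_def D_def)
    finally show ?thesis .
  qed
  define G where "G = {x. x \<notin> Y \<and> (\<exists>\<eta>. \<forall>y\<in>Y. sg x y = (\<eta> = t y))}"
  have "opt ?q (card Y) \<le> card G" unfolding G_def by (rule ext_count[OF q(1)]) (use cY dv in simp)
  moreover have "opt ?q (deg E H v) \<le> opt ?q (card Y)" by (rule opt_anti) (use cY dv q in auto)
  ultimately have FG: "card F < card G" using cF lv by linarith
  have "\<exists>x\<in>G. x \<notin> F"
  proof (rule ccontr)
    assume "\<not> ?thesis"
    then have "G \<subseteq> F" by auto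
    then have "card G \<le> card F" by (rule card_mono[rotated]) simp
    then show False using FG by simp
  qed
  then obtain x \<eta> where x: "x \<notin> Y" "\<forall>y\<in>Y. sg x y = (\<eta> = t y)" "x \<notin> F" unfolding G_def by blast
  define c' where "c' = c(v := x)"
  define \<beta>' where "\<beta>' = \<beta>(v := \<eta>)"
  have key: "c' a \<noteq> c' v \<and> sg (c' a) (c' v) = (s {a, v} = (\<beta>' a = \<beta>' v))" if a: "a \<in> A" for a
  proof -
    have av: "a \<noteq> v" using a A_sub by auto
    have cy: "c a \<in> Y" using a by (simp add: Y_def)
    then have "sg x (c a) = (\<eta> = (s {v, a} = \<beta> a))" using x(2) ht[OF a] by simp
    then have "sg (c a) x = (s {a, v} = (\<beta> a = \<eta>))" by (auto simp: sg_sym insert_commute)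
    moreover have "c a \<noteq> x" using cy x(1) by auto
    ultimately show ?thesis using av by (simp add: c'_def \<beta>'_def)
  qed
  have "valid E s H c' \<beta>'"
    unfolding valid_def
  proof (intro ballI impI)
    fix u w assume u: "u \<in> H" and w: "w \<in> H" and e: "{u, w} \<in> E"
    show "c' u \<noteq> c' w \<and> sg (c' u) (c' w) = (s {u, w} = (\<beta>' u = \<beta>' w))"
    proof (cases "u = v"; cases "w = v")
      assume "u = v" "w = v" then show ?thesis using e nl by simp
    next
      assume h: "u = v" "w \<noteq> v"
      then have "w \<in> A" using w e by (auto simp: A_def nb_def insert_commute)
      then show ?thesis using key[of w] h by (auto simp: sg_sym insert_commute)
    next
      assume h: "u \<noteq> v" "w = v"
      then have "u \<in> A" using u e by (auto simp: A_def nb_def)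
      then show ?thesis using key[of u] h by auto
    next
      assume h: "u \<noteq> v" "w \<noteq> v"
      then have "c' u \<noteq> c u \<longrightarrow> False" "c' w \<noteq> c w \<longrightarrow> False" "\<beta>' u = \<beta> u" "\<beta>' w = \<beta> w"
        by (auto simp: c'_def \<beta>'_def)
      moreover have "c u \<noteq> c w \<and> sg (c u) (c w) = (s {u, w} = (\<beta> u = \<beta> w))"
        using val u w h e unfolding valid_def by auto
      ultimately show ?thesis by auto
    qed
  qed
  moreover have "cfree V E s H c' \<beta>'"
    unfolding cfree_def
  proof (intro ballI impI)
    fix w a b assume w: "w \<in> V - H" and a: "a \<in> H" and b: "b \<in> H"
      and ea: "{w, a} \<in> E" and eb: "{w, b} \<in> E" and cab: "c' a = c' b"
    have inF: "c y \<in> F" if y: "y \<in> H" "y \<noteq> v" "{w, y} \<in> E" and ev: "{w, v} \<in> E" for y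
    proof -
      have "w \<in> D" using w ev by (simp add: D_def)
      moreover have "y \<in> nb E H w - {v}" using y by (auto simp: nb_def insert_commute)
      ultimately show ?thesis unfolding F_def by blast
    qed
    show "(s {w, a} = \<beta>' a) = (s {w, b} = \<beta>' b)"
    proof (cases "a = v"; cases "b = v")
      assume "a = v" "b = v" then show ?thesis by simp
    next
      assume h: "a = v" "b \<noteq> v"
      then have "c b = x" using cab by (simp add: c'_def)
      moreover have "c b \<in> F" using inF[OF b h(2) eb] ea h by simp
      ultimately show ?thesis using x(3) by simp
    next
      assume h: "a \<noteq> v" "b = v"
      then have "c a = x" using cab by (simp add: c'_def)
      moreover have "c a \<in> F" using inF[OF a h(1) ea] eb h by simp
      ultimately show ?thesis using x(3) by simp
    next
      assume h: "a \<noteq> v" "b \<noteq> v"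
      then have "c a = c b" using cab by (simp add: c'_def)
      moreover have "w \<in> V - (H - {v})" using w by auto
      ultimately have "(s {w, a} = \<beta> a) = (s {w, b} = \<beta> b)"
        using cf a b h ea eb unfolding cfree_def by blast
      then show ?thesis using h by (simp add: \<beta>'_def)
    qed
  qed
  ultimately show ?thesis by blast
qed



lemma color_all:
  fixes V :: "'v set" and E :: "'v set set" and s :: "'v set \<Rightarrow> bool"
  assumes q: "card (UNIV::'f::{finite,field} set) mod 4 = 1" "card (UNIV::'f set) \<ge> 5"
    and finV: "finite V" and edges: "\<forall>e\<in>E. e \<subseteq> V \<and> card e = 2"
    and dens: "\<forall>S. S \<subseteq> V \<longrightarrow> S \<noteq> {} \<longrightarrow> (card (UNIV::'f set) + 3) * card {e\<in>E. e \<subseteq> S}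
                 < 2 * (card (UNIV::'f set) + 1) * card S"
  shows "H \<subseteq> V \<Longrightarrow> (\<forall>w\<in>V - H. deg E H w \<le> 3) \<Longrightarrow>
         \<exists>(c::'v \<Rightarrow> 'f option) \<beta>. valid E s H c \<beta> \<and> cfree V E s H c \<beta>"
proof (induction "card H" arbitrary: H rule: less_induct)
  case less
  show ?case
  proof (cases "H = {}")
    case True
    then have "valid E s H (\<lambda>_. None :: 'f option) (\<lambda>_. False) \<and> cfree V E s H (\<lambda>_. None :: 'f option) (\<lambda>_. False)"
      by (simp add: valid_def cfree_def)
    then show ?thesis by blast
  next
    case False
    obtain v where v: "v \<in> H" "deg E H v \<le> 3" "load V E H v < opt (card (UNIV::'f set)) (deg E H v)"
      using peel[OF finV edges dens q(1) q(2) less.prems(1) False less.prems(2)] by blast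
    let ?H = "H - {v}"
    have finH: "finite H" using less.prems(1) finV by (rule finite_subset)
    have nl: "\<And>x. {x, x} \<notin> E" using edges by auto
    have cH: "card ?H < card H" using v(1) finH by (meson card_Diff1_less)
    have inv: "\<forall>w\<in>V - ?H. deg E ?H w \<le> 3"
    proof
      fix w assume w: "w \<in> V - ?H"
      show "deg E ?H w \<le> 3"
      proof (cases "w = v")
        case True
        have "nb E ?H v = nb E H v" using nl by (auto simp: nb_def)
        then show ?thesis using True v(2) by (simp add: deg_def)
      next
        case False
        then have "w \<in> V - H" using w by auto
        then have "deg E H w \<le> 3" using less.prems(2) by auto
        moreover have "deg E ?H w \<le> deg E H w"
          unfolding deg_def by (rule card_mono) (use finH in \<open>auto simp: nb_def\<close>)
        ultimately show ?thesis by linarith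
      qed
    qed
    obtain c :: "'v \<Rightarrow> 'f option" and \<beta> where cb: "valid E s ?H c \<beta>" "cfree V E s ?H c \<beta>"
      using less.hyps[OF cH _ inv] less.prems(1) by blast
    show ?thesis
      by (rule extend_step[OF q finV edges v(1) less.prems(1) v(2) v(3) cb])
  qed
qed

definition swX :: "'v set \<Rightarrow> ('v set \<Rightarrow> bool) \<Rightarrow> 'v set \<Rightarrow> bool" where
  "swX X s = (\<lambda>e. if odd (card (e \<inter> X)) then \<not> s e else s e)"

lemma switch_set:
  assumes "finite X" "X \<subseteq> V"
  shows "switching_equiv V s (swX X s)"
  using assms
proof (induction X rule: finite_induct)
  case empty
  have "swX {} s = s" by (simp add: swX_def)
  then show ?case by (simp add: switching_equiv_def)
next
  case (insert x F)
  have eq: "swX (insert x F) s = switch x (swX F s)"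
  proof
    fix e
    show "swX (insert x F) s e = switch x (swX F s) e"
    proof (cases "x \<in> e")
      case True
      then have "e \<inter> insert x F = insert x (e \<inter> F)" by auto
      moreover have "card (insert x (e \<inter> F)) = Suc (card (e \<inter> F))"
        using insert.hyps by (simp add: card_insert_disjoint)
      ultimately show ?thesis using True by (simp add: swX_def switch_def)
    next
      case False
      then have "e \<inter> insert x F = e \<inter> F" by auto
      then show ?thesis using False by (simp add: swX_def switch_def)
    qed
  qed
  have "switching_equiv V s (swX F s)" using insert by simp
  moreover have "x \<in> V" using insert.prems by simp
  ultimately show ?case unfolding switching_equiv_def eq
  proof -
    assume IH: "(\<lambda>a b. \<exists>v\<in>V. b = switch v a)\<^sup>*\<^sup>* s (swX F s)" and xV: "x \<in> V"
    have step: "(\<lambda>a b. \<exists>v\<in>V. b = switch v a) (swX F s) (switch x (swX F s))" using xV by blast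
    show "(\<lambda>a b. \<exists>v\<in>V. b = switch v a)\<^sup>*\<^sup>* s (switch x (swX F s))"
      by (rule rtranclp.rtrancl_into_rtrancl[where r="\<lambda>a b. \<exists>v\<in>V. b = switch v a", OF IH step])
  qed
qed

lemma mad_dens:
  fixes V :: "'v set" and E :: "'v set set" and q :: nat
  assumes sgr: "signed_graph V E s" and madlt: "mad V E < 4 - 8 / (real q + 3)"
  shows "\<forall>S. S \<subseteq> V \<longrightarrow> S \<noteq> {} \<longrightarrow> (q + 3) * card {e\<in>E. e \<subseteq> S} < 2 * (q + 1) * card S"
proof (intro allI impI)
  fix S assume S: "S \<subseteq> V" "S \<noteq> {}"
  have finV: "finite V" and edges: "\<forall>e\<in>E. e \<subseteq> V \<and> card e = 2" using sgr by (auto simp: signed_graph_def)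
  have finE: "finite E" by (rule finite_subset[of _ "Pow V"]) (use edges finV in auto)
  let ?X = "{2 * real (card E') / real (card V') | V' E'.
                    V' \<subseteq> V \<and> V' \<noteq> {} \<and> E' \<subseteq> E \<and> (\<forall>e\<in>E'. e \<subseteq> V')}"
  have finX: "finite ?X"
  proof (rule finite_subset)
    show "?X \<subseteq> (\<lambda>(V', E'). 2 * real (card E') / real (card V')) ` (Pow V \<times> Pow E)" by auto
    show "finite ((\<lambda>(V', E'). 2 * real (card E') / real (card V')) ` (Pow V \<times> Pow E))"
      using finV finE by simp
  qed
  have mem: "2 * real (card {e\<in>E. e \<subseteq> S}) / real (card S) \<in> ?X" using S by blast
  have "2 * real (card {e\<in>E. e \<subseteq> S}) / real (card S) \<le> mad V E"
    unfolding mad_def by (rule Max_ge[OF finX mem])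
  then have lt: "2 * real (card {e\<in>E. e \<subseteq> S}) / real (card S) < 4 - 8 / (real q + 3)" using madlt by linarith
  have finS: "finite S" using S finV by (meson finite_subset)
  then have np: "real (card S) > 0" using S by (simp add: card_gt_0_iff)
  define e where "e = real (card {e\<in>E. e \<subseteq> S})"
  define n where "n = real (card S)"
  define Q where "Q = real q"
  have Q0: "Q \<ge> 0" by (simp add: Q_def)
  have "2 * e / n < 4 - 8 / (Q + 3)" using lt by (simp add: e_def n_def Q_def)
  then have "2 * e < (4 - 8 / (Q + 3)) * n" using np by (simp add: n_def divide_less_eq)
  also have "(4 - 8 / (Q + 3)) * n = (4 * Q + 4) * n / (Q + 3)" using Q0 by (simp add: field_simps)
  finally have "2 * e * (Q + 3) < (4 * Q + 4) * n" using Q0 by (simp add: less_divide_eq)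
  then have "(Q + 3) * e < 2 * (Q + 1) * n" by (simp add: algebra_simps)
  moreover have "real ((q + 3) * card {e\<in>E. e \<subseteq> S}) = (Q + 3) * e" by (simp add: e_def Q_def)
  moreover have "real (2 * (q + 1) * card S) = 2 * (Q + 1) * n" by (simp add: n_def Q_def algebra_simps)
  ultimately have "real ((q + 3) * card {e\<in>E. e \<subseteq> S}) < real (2 * (q + 1) * card S)"
    by simp
  then show "(q + 3) * card {e\<in>E. e \<subseteq> S} < 2 * (q + 1) * card S" by (simp only: of_nat_less_iff)
qed

lemma plusE_mem:
  fixes x y :: "'f::field option"
  assumes "x \<noteq> y"
  shows "{x, y} \<in> plus_E (SP_V :: 'f set) SP_E"
proof (cases x; cases y)
  assume "x = None" "y = None" then show ?thesis using assms by simp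
next
  fix b assume "x = None" "y = Some b"
  then show ?thesis by (auto simp: plus_E_def SP_V_def)
next
  fix a assume "x = Some a" "y = None"
  then have "{x, y} = {None, Some a}" by auto
  then show ?thesis by (auto simp: plus_E_def SP_V_def)
next
  fix a b assume h: "x = Some a" "y = Some b"
  then have "a \<noteq> b" using assms by simp
  then have "{a, b} \<in> (SP_E :: 'f set set)" by (auto simp: SP_E_def)
  moreover have "{x, y} = Some ` {a, b}" using h by simp
  ultimately have "{x, y} \<in> (image Some) ` SP_E" by (intro image_eqI[where x="{a, b}"]) simp_all
  then show ?thesis unfolding plus_E_def by (rule UnI1)
qed



theorem theorem4:
  fixes V :: "'v set" and E :: "'v set set" and s :: "'v set \<Rightarrow> bool"
  assumes "finite (UNIV :: 'f::{finite,field} set)"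
    and "card (UNIV :: 'f set) > 9"
    and "card (UNIV :: 'f set) mod 4 = 1"
    and "signed_graph V E s"
    and "mad V E < 4 - 8 / (real (card (UNIV :: 'f set)) + 3)"
  shows "\<exists>\<phi>. signed_hom V E s (plus_V (SP_V :: 'f set)) (plus_E (SP_V :: 'f set) SP_E)
                 (plus_sign SP_sign) \<phi>"
proof -
  have q: "card (UNIV :: 'f set) mod 4 = 1" "card (UNIV :: 'f set) \<ge> 5" using assms(2,3) by auto
  have finV: "finite V" and edges: "\<forall>e\<in>E. e \<subseteq> V \<and> card e = 2"
    using assms(4) by (auto simp: signed_graph_def)
  have dens: "\<forall>S. S \<subseteq> V \<longrightarrow> S \<noteq> {} \<longrightarrow> (card (UNIV::'f set) + 3) * card {e\<in>E. e \<subseteq> S}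
                 < 2 * (card (UNIV::'f set) + 1) * card S"
    by (rule mad_dens[OF assms(4) assms(5)])
  obtain c :: "'v \<Rightarrow> 'f option" and \<beta> where val: "valid E s V c \<beta>"
    using color_all[OF q finV edges dens, of V s] by auto
  define X where "X = {v\<in>V. \<beta> v}"
  define s' where "s' = swX X s"
  have sw: "switching_equiv V s s'" unfolding s'_def
    by (rule switch_set) (use finV in \<open>auto simp: X_def\<close>)
  have hv: "\<forall>v\<in>V. c v \<in> plus_V (SP_V :: 'f set)"
  proof
    fix v show "c v \<in> plus_V (SP_V :: 'f set)" by (cases "c v") (auto simp: plus_V_def SP_V_def)
  qed
  have he: "{c u, c v} \<in> plus_E (SP_V :: 'f set) SP_E \<and> plus_sign SP_sign {c u, c v} = s' {u, v}"
    if e: "{u, v} \<in> E" for u v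
  proof -
    have uv: "u \<in> V" "v \<in> V" using e edges by auto
    have ne: "u \<noteq> v" using e edges by fastforce
    have vl: "c u \<noteq> c v \<and> sg (c u) (c v) = (s {u, v} = (\<beta> u = \<beta> v))"
      using val uv e unfolding valid_def by blast
    have "s' {u, v} = (s {u, v} = (\<beta> u = \<beta> v))"
    proof (cases "\<beta> u"; cases "\<beta> v")
      assume "\<beta> u" "\<beta> v"
      then have "{u, v} \<inter> X = {u, v}" using uv by (auto simp: X_def)
      then show ?thesis using ne \<open>\<beta> u\<close> \<open>\<beta> v\<close> by (simp add: s'_def swX_def)
    next
      assume "\<beta> u" "\<not> \<beta> v"
      then have "{u, v} \<inter> X = {u}" using uv by (auto simp: X_def)
      then show ?thesis using \<open>\<beta> u\<close> \<open>\<not> \<beta> v\<close> by (simp add: s'_def swX_def)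
    next
      assume "\<not> \<beta> u" "\<beta> v"
      then have "{u, v} \<inter> X = {v}" using uv by (auto simp: X_def)
      then show ?thesis using \<open>\<not> \<beta> u\<close> \<open>\<beta> v\<close> by (simp add: s'_def swX_def)
    next
      assume "\<not> \<beta> u" "\<not> \<beta> v"
      then have "{u, v} \<inter> X = {}" using uv by (auto simp: X_def)
      then show ?thesis using \<open>\<not> \<beta> u\<close> \<open>\<not> \<beta> v\<close> by (simp add: s'_def swX_def)
    qed
    then show ?thesis using vl plusE_mem[of "c u" "c v"] by (simp add: sg_def)
  qed
  have "signed_hom V E s (plus_V (SP_V :: 'f set)) (plus_E (SP_V :: 'f set) SP_E) (plus_sign SP_sign) c"
    unfolding signed_hom_def using hv sw he by blast
  then show ?thesis by blast
qed

end
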